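(* Let $n\in\mathbb{N}$. Then the complete graph $K_n$ is an $\mathcal{N}$ position for Grim if and only if $n$ is even.
   Context: Grim is a two-player game on a finite simple undirected graph. Any isolated vertices of the starting graph are deleted before play begins. Players alternate moves; a move consists of selecting a vertex of the current graph and deleting it together with all its incident edges, after which every vertex that has become isolated is also deleted. The player who makes the last legal move wins (a player facing the empty graph has no move and loses). A graph is an $\mathcal{N}$ position if the player about to move has a winning strategy, and a $\mathcal{P}$ position otherwise. *)

theory Defs
  imports Main
begin

type_synonym 'a graph = "'a set \<times> 'a set set"

definition finite_simple_graph :: "'a graph \<Rightarrow> bool" where
  "finite_simple_graph G \<longleftrightarrow> finite (fst G) \<and>
     (\<forall>e\<in>snd G. e \<subseteq> fst G \<and> card e = 2)"

definition del_isolated :: "'a graph \<Rightarrow> 'a graph" where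
  "del_isolated G = ({v \<in> fst G. \<exists>e\<in>snd G. v \<in> e}, snd G)"

definition grim_move :: "'a graph \<Rightarrow> 'a \<Rightarrow> 'a graph" where
  "grim_move G v = del_isolated (fst G - {v}, {e \<in> snd G. v \<notin> e})"

lemma card_grim_move_less:
  assumes "finite (fst G)" "v \<in> fst G"
  shows "card (fst (grim_move G v)) < card (fst G)"
proof -
  have "fst (grim_move G v) \<subseteq> fst G - {v}"
    by (auto simp: grim_move_def del_isolated_def)
  moreover have "fst G - {v} \<subset> fst G" using assms(2) by auto
  ultimately have "fst (grim_move G v) \<subset> fst G" by blast
  then show ?thesis using assms(1) by (simp add: psubset_card_mono)
qed

text \<open>grim_win G: the player about to move in the current graph G has a
winning strategy (normal play: the player with no legal move loses).
Legal moves are the vertices of the current graph.\<close>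
function grim_win :: "'a graph \<Rightarrow> bool" where
  "grim_win G = (if finite (fst G)
                 then (\<exists>v\<in>fst G. \<not> grim_win (grim_move G v))
                 else False)"
  by auto
termination
  by (relation "measure (\<lambda>G. card (fst G))")
     (auto simp: card_grim_move_less)

declare grim_win.simps [simp del]

definition grim_N_position :: "'a graph \<Rightarrow> bool" where
  "grim_N_position G \<longleftrightarrow> grim_win (del_isolated G)"

definition grim_P_position :: "'a graph \<Rightarrow> bool" where
  "grim_P_position G \<longleftrightarrow> \<not> grim_win (del_isolated G)"

definition complete_graph :: "nat \<Rightarrow> nat graph" where
  "complete_graph n = ({..<n}, {{i, j} | i j. i < n \<and> j < n \<and> i \<noteq> j})"

end

theory Submission
  imports Defs
begin

definition KG :: "'a set \<Rightarrow> 'a graph" where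
  "KG S = (S, {{i, j} | i j. i \<in> S \<and> j \<in> S \<and> i \<noteq> j})"

lemma move_KG: "grim_move (KG S) v = del_isolated (KG (S - {v}))"
  unfolding grim_move_def KG_def by (auto intro!: arg_cong[where f=del_isolated])

lemma del_KG_big:
  assumes "finite T" "card T \<ge> 2"
  shows "del_isolated (KG T) = KG T"
proof -
  define E where "E = {{i, j} | i j. i \<in> T \<and> j \<in> T \<and> i \<noteq> j}"
  have KGT: "KG T = (T, E)" by (simp add: KG_def E_def)
  have "{v \<in> T. \<exists>e\<in>E. v \<in> e} = T"
  proof (intro equalityI subsetI)
    fix v assume "v \<in> {v \<in> T. \<exists>e\<in>E. v \<in> e}" then show "v \<in> T" by blast
  next
    fix v assume v: "v \<in> T"
    have "card (T - {v}) = card T - 1" using v by (rule card_Diff_singleton)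
    then have "0 < card (T - {v})" using assms(2) by linarith
    then have "T - {v} \<noteq> {}" using card_gt_0_iff by blast
    then obtain w where w: "w \<in> T" "w \<noteq> v" by blast
    have "{v, w} \<in> E" unfolding E_def using v w by blast
    then show "v \<in> {v \<in> T. \<exists>e\<in>E. v \<in> e}" using v by blast
  qed
  then show ?thesis unfolding KGT del_isolated_def by simp
qed

lemma del_KG_small:
  assumes "finite T" "card T < 2"
  shows "fst (del_isolated (KG T)) = {}"
proof -
  have "\<And>a b. a \<in> T \<Longrightarrow> b \<in> T \<Longrightarrow> a = b"
  proof (rule ccontr)
    fix a b assume "a \<in> T" "b \<in> T" "a \<noteq> b"
    then have "{a,b} \<subseteq> T" by auto
    then have "card {a,b} \<le> card T" using assms(1) card_mono by blast
    then show False using \<open>a\<noteq>b\<close> assms(2) by simp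
  qed
  then show ?thesis unfolding del_isolated_def KG_def by auto
qed

lemma win_empty: "fst G = {} \<Longrightarrow> \<not> grim_win G"
  by (subst grim_win.simps) auto

lemma arith_aux: "(k::nat) \<ge> 2 \<Longrightarrow> (\<not> (k - 1 \<ge> 2 \<and> even (k - 1))) = even k"
proof -
  assume "k \<ge> 2"
  then obtain m where k: "k = m + 2" using le_Suc_ex by (metis add.commute)
  have "even (m + 2) = even m" by simp
  have "m + 2 - 1 = m + 1" by simp
  show ?thesis unfolding k by (cases m) auto
qed

lemma win_unfold: "finite S \<Longrightarrow> grim_win (KG S) = (\<exists>v\<in>S. \<not> grim_win (grim_move (KG S) v))"
proof -
  assume f: "finite S"
  have "grim_win (KG S) = (if finite (fst (KG S)) then (\<exists>v\<in>fst (KG S). \<not> grim_win (grim_move (KG S) v)) else False)"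
    by (rule grim_win.simps)
  moreover have "fst (KG S) = S" by (simp add: KG_def)
  ultimately show ?thesis using f by simp
qed

lemma main:
  "finite T \<Longrightarrow> grim_win (del_isolated (KG T)) \<longleftrightarrow> card T \<ge> 2 \<and> even (card T)"
proof (induction "card T" arbitrary: T rule: less_induct)
  case less
  show ?case
  proof (cases "card T \<ge> 2")
    case False
    then have c: "card T < 2" by simp
    have "\<not> grim_win (del_isolated (KG T))"
      by (rule win_empty[OF del_KG_small[OF less.prems c]])
    then show ?thesis using False by blast
  next
    case True
    have ih: "\<And>v. v \<in> T \<Longrightarrow> grim_win (grim_move (KG T) v) \<longleftrightarrow>
        card T - 1 \<ge> 2 \<and> even (card T - 1)"
    proof -
      fix v assume "v \<in> T"
      have c1: "card (T - {v}) = card T - 1" using \<open>v\<in>T\<close> less.prems by simp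
      have c2: "card T - 1 < card T" using True by simp
      have f: "finite (T - {v})" using less.prems by simp
      have "grim_win (del_isolated (KG (T - {v}))) \<longleftrightarrow> card (T - {v}) \<ge> 2 \<and> even (card (T - {v}))"
        using less.hyps[OF _ f] c1 c2 by simp
      then show "grim_win (grim_move (KG T) v) \<longleftrightarrow>
        card T - 1 \<ge> 2 \<and> even (card T - 1)"
        by (simp only: move_KG c1)
    qed
    have "0 < card T" using True by linarith
    then have ne: "T \<noteq> {}" using card_gt_0_iff by blast
    then obtain v0 where v0: "v0 \<in> T" by blast
    have "grim_win (KG T) \<longleftrightarrow> (\<exists>v\<in>T. \<not> grim_win (grim_move (KG T) v))"
      by (rule win_unfold[OF less.prems])
    also have "\<dots> \<longleftrightarrow> \<not> (card T - 1 \<ge> 2 \<and> even (card T - 1))"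
    proof
      assume "\<exists>v\<in>T. \<not> grim_win (grim_move (KG T) v)"
      then obtain v where "v \<in> T" "\<not> grim_win (grim_move (KG T) v)" by blast
      then show "\<not> (card T - 1 \<ge> 2 \<and> even (card T - 1))" using ih by blast
    next
      assume "\<not> (card T - 1 \<ge> 2 \<and> even (card T - 1))"
      then show "\<exists>v\<in>T. \<not> grim_win (grim_move (KG T) v)" using ih v0 by blast
    qed
    also have "\<dots> \<longleftrightarrow> even (card T)" by (rule arith_aux[OF True])
    finally have "grim_win (KG T) \<longleftrightarrow> even (card T)" .
    then show ?thesis using del_KG_big[OF less.prems True] True by simp
  qed
qed

theorem lemma3p1:
  fixes n :: nat
  assumes "n \<ge> 1"
  shows "grim_N_position (complete_graph n) \<longleftrightarrow> even n"
proof -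
  have "complete_graph n = KG {..<n}" unfolding complete_graph_def KG_def by auto
  then have "grim_N_position (complete_graph n) \<longleftrightarrow> n \<ge> 2 \<and> even n"
    unfolding grim_N_position_def using main[of "{..<n}"] by simp
  then show ?thesis using assms by presburger
qed

end
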